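(* Let $\psi:\mathbb{R}\to\mathbb{R}$ be a piecewise smooth function and let $\theta_1\neq\theta_2\in(0,\pi)$ be such that, for $i=1,2$: $\psi(s)\sin\theta_i+s\cos\theta_i\to+\infty$ as $s\to\pm\infty$, and $s\mapsto\psi(s)\sin\theta_i+s\cos\theta_i$ has a unique local minimum. Let $\Gamma=\{(s,\psi(s)):s\in\mathbb{R}\}$ be the graph of $\psi$. Then $(\Gamma,\ell_{\theta_1}\cup\ell_{\theta_2})$ is a Heisenberg Uniqueness Pair.
   Context: For a finite complex Borel measure $\mu$ on $\mathbb{R}^2$, $\widehat{\mu}(x,y)=\int_{\mathbb{R}^2}e^{-i(xs+yt)}\,d\mu(s,t)$. For an angle $\theta$, $\ell_\theta=\{t(\cos\theta,\sin\theta):t\in\mathbb{R}\}$. $\mathcal{AC}(\Gamma)$ is the set of finite complex measures supported on $\Gamma$ and absolutely continuous with respect to arc length on $\Gamma$. For $\Lambda\subset\mathbb{R}^2$, $(\Gamma,\Lambda)$ is a Heisenberg Uniqueness Pair if every $\mu\in\mathcal{AC}(\Gamma)$ with $\widehat{\mu}=0$ on $\Lambda$ satisfies $\mu=0$. *)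

theory Defs
  imports "HOL-Analysis.Analysis"
begin

text \<open>Piecewise smooth function: continuous, and there is a locally finite set S of
break points such that off S the function is infinitely differentiable and every
derivative has finite one-sided limits at each break point (so each piece extends
smoothly up to its end points).\<close>
definition piecewise_smooth :: "(real \<Rightarrow> real) \<Rightarrow> bool" where
  "piecewise_smooth \<psi> \<longleftrightarrow> continuous_on UNIV \<psi> \<and>
     (\<exists>S. (\<forall>a b. finite (S \<inter> {a..b})) \<and>
          (\<forall>n. \<forall>x\<in>-S. ((deriv ^^ n) \<psi>) differentiable (at x)) \<and>
          (\<forall>n. \<forall>a\<in>S. \<exists>l r. (((deriv ^^ n) \<psi>) \<longlongrightarrow> l) (at_left a) \<and>
                              (((deriv ^^ n) \<psi>) \<longlongrightarrow> r) (at_right a)))"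

definition is_local_min :: "(real \<Rightarrow> real) \<Rightarrow> real \<Rightarrow> bool" where
  "is_local_min \<phi> s \<longleftrightarrow> (\<exists>e>0. \<forall>t. \<bar>t - s\<bar> < e \<longrightarrow> \<phi> s \<le> \<phi> t)"

definition line :: "real \<Rightarrow> (real \<times> real) set" where
  "line \<theta> = {(t * cos \<theta>, t * sin \<theta>) | t. True}"

definition arclen :: "(real \<Rightarrow> real) \<Rightarrow> (real \<times> real) measure" where
  "arclen \<psi> = distr (density lborel (\<lambda>s. ennreal (sqrt (1 + (deriv \<psi> s)\<^sup>2))))
                      borel (\<lambda>s. (s, \<psi> s))"

definition fourier_dens :: "(real \<times> real) measure \<Rightarrow> (real \<times> real \<Rightarrow> complex) \<Rightarrow> real \<times> real \<Rightarrow> complex" where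
  "fourier_dens M f = (\<lambda>(x, y). LINT p|M. exp (- \<i> * complex_of_real (x * fst p + y * snd p)) * f p)"

text \<open>Heisenberg uniqueness pair for the graph Gamma of psi: the elements of AC(Gamma)
are exactly the measures f d(arclen) with f integrable (Radon-Nikodym); such a measure
vanishes iff f = 0 almost everywhere w.r.t. arc length.\<close>
definition HUP_graph :: "(real \<Rightarrow> real) \<Rightarrow> (real \<times> real) set \<Rightarrow> bool" where
  "HUP_graph \<psi> \<Lambda> \<longleftrightarrow>
     (\<forall>f :: real \<times> real \<Rightarrow> complex. integrable (arclen \<psi>) f \<longrightarrow>
        (\<forall>\<xi>\<in>\<Lambda>. fourier_dens (arclen \<psi>) f \<xi> = 0) \<longrightarrow>
        (AE p in arclen \<psi>. f p = 0))"

end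

theory Submission
  imports Defs "HOL-Probability.Levy"
begin


lemma shape_right:
  fixes \<phi> :: "real \<Rightarrow> real"
  assumes cont: "continuous_on UNIV \<phi>" and lim: "filterlim \<phi> at_top at_top"
    and nolm: "\<And>q. q > x \<Longrightarrow> \<not> is_local_min \<phi> q" and xy: "x < y"
  shows "\<phi> x < \<phi> y"
proof -
  have "eventually (\<lambda>s. \<phi> s > \<phi> x) at_top"
    using lim by (simp add: filterlim_at_top_dense)
  then obtain X0 where X0: "\<And>s. s \<ge> X0 \<Longrightarrow> \<phi> s > \<phi> x" by (auto simp: eventually_at_top_linorder)
  define X where "X = max X0 x"
  have "\<exists>p\<in>{x..X}. \<forall>s\<in>{x..X}. \<phi> p \<le> \<phi> s"
    by (rule continuous_attains_inf) (auto simp: X_def intro: continuous_on_subset[OF cont])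
  then obtain p where p: "p \<in> {x..X}" "\<And>s. s \<in> {x..X} \<Longrightarrow> \<phi> p \<le> \<phi> s" by blast
  have pall: "\<phi> p \<le> \<phi> s" if "s \<ge> x" for s
  proof (cases "s \<le> X")
    case True then show ?thesis using p that by auto
  next
    case False
    then have "\<phi> s > \<phi> x" using X0 by (auto simp: X_def)
    moreover have "\<phi> p \<le> \<phi> x" using p(2)[of x] by (auto simp: X_def)
    ultimately show ?thesis by linarith
  qed
  have nomin: False if q: "q > x" "\<And>s. s \<ge> x \<Longrightarrow> \<phi> q \<le> \<phi> s" for q
  proof -
    have "is_local_min \<phi> q"
      unfolding is_local_min_def
    proof (intro exI[of _ "q - x"] conjI allI impI)
      fix t assume "\<bar>t - q\<bar> < q - x"
      then show "\<phi> q \<le> \<phi> t" using q by (intro q(2)) auto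
    qed (use q in auto)
    then show False using nolm q by blast
  qed
  have "p = x"
  proof (rule ccontr)
    assume "p \<noteq> x"
    then have "p > x" using p by auto
    then show False using nomin[of p] pall by auto
  qed
  then have "\<phi> x \<le> \<phi> y" using pall xy by auto
  moreover have "\<phi> x \<noteq> \<phi> y"
  proof
    assume "\<phi> x = \<phi> y"
    then show False using nomin[of y] xy pall \<open>p = x\<close> by auto
  qed
  ultimately show ?thesis by auto
qed



lemma shape:
  fixes \<phi> :: "real \<Rightarrow> real"
  assumes cont: "continuous_on UNIV \<phi>" and lim1: "filterlim \<phi> at_top at_top"
    and lim2: "filterlim \<phi> at_top at_bot"
    and m: "is_local_min \<phi> m" and uniq: "\<And>s. is_local_min \<phi> s \<Longrightarrow> s = m"
  shows "\<And>x y. m \<le> x \<Longrightarrow> x < y \<Longrightarrow> \<phi> x < \<phi> y"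
    and "\<And>x y. x < y \<Longrightarrow> y \<le> m \<Longrightarrow> \<phi> y < \<phi> x"
proof -
  fix x y :: real assume "m \<le> x" "x < y"
  then show "\<phi> x < \<phi> y"
    by (intro shape_right[OF cont lim1]) (use uniq in force)+
next
  fix x y :: real assume xy: "x < y" "y \<le> m"
  let ?\<chi> = "\<lambda>s. \<phi> (- s)"
  have c2: "continuous_on UNIV ?\<chi>"
    by (intro continuous_on_compose2[OF cont]) (auto intro: continuous_intros)
  have l2: "filterlim ?\<chi> at_top at_top" using lim2 by (simp add: filterlim_at_bot_mirror)
  have lm: "is_local_min ?\<chi> q \<longleftrightarrow> is_local_min \<phi> (-q)" for q
  proof
    assume "is_local_min ?\<chi> q"
    then obtain e where "e > 0" "\<And>t. \<bar>t - q\<bar> < e \<Longrightarrow> \<phi> (-q) \<le> \<phi> (-t)"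
      unfolding is_local_min_def by auto
    then show "is_local_min \<phi> (-q)" unfolding is_local_min_def
      by (intro exI[of _ e]) (auto, metis abs_minus_commute add.commute add_uminus_conv_diff minus_diff_eq minus_minus)
  next
    assume "is_local_min \<phi> (-q)"
    then obtain e where "e > 0" "\<And>t. \<bar>t - (-q)\<bar> < e \<Longrightarrow> \<phi> (-q) \<le> \<phi> t"
      unfolding is_local_min_def by auto
    then show "is_local_min ?\<chi> q" unfolding is_local_min_def
    proof (intro exI[of _ e] conjI allI impI)
      fix t assume "\<bar>t - q\<bar> < e"
      then have "\<bar>(-t) - (-q)\<bar> < e" by linarith
      then show "\<phi> (- q) \<le> ?\<chi> t" using \<open>\<And>t. \<bar>t - (-q)\<bar> < e \<Longrightarrow> \<phi> (-q) \<le> \<phi> t\<close> by blast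
    qed (use \<open>e > 0\<close> in auto)
  qed
  have "?\<chi> (-y) < ?\<chi> (-x)"
    by (rule shape_right[OF c2 l2]) (use xy uniq lm in force)+
  then show "\<phi> y < \<phi> x" by simp
qed

lemma partner:
  fixes \<phi> :: "real \<Rightarrow> real"
  assumes cont: "continuous_on UNIV \<phi>" and lim1: "filterlim \<phi> at_top at_top"
    and lim2: "filterlim \<phi> at_top at_bot"
    and inc: "\<And>x y. m \<le> x \<Longrightarrow> x < y \<Longrightarrow> \<phi> x < \<phi> y"
    and dec: "\<And>x y. x < y \<Longrightarrow> y \<le> m \<Longrightarrow> \<phi> y < \<phi> x"
  shows "\<exists>y. \<phi> y = \<phi> x \<and> {s. \<phi> s \<le> \<phi> x} = {min x y..max x y} \<and>
             (m \<le> x \<longrightarrow> y \<le> m) \<and> (x \<le> m \<longrightarrow> m \<le> y)"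
proof (cases "m \<le> x")
  case True
  have fm: "\<phi> m \<le> \<phi> x" using inc[of m x] True by (cases "m = x") auto
  have "eventually (\<lambda>s. \<phi> s \<ge> \<phi> x) at_bot"
    using lim2 by (simp add: filterlim_at_top)
  then obtain X0 where X0: "\<And>s. s \<le> X0 \<Longrightarrow> \<phi> s \<ge> \<phi> x" by (auto simp: eventually_at_bot_linorder)
  define X where "X = min X0 m"
  have "\<exists>y\<ge>X. y \<le> m \<and> \<phi> y = \<phi> x"
    by (rule IVT2') (use fm X0 in \<open>auto simp: X_def intro: continuous_on_subset[OF cont]\<close>)
  then obtain y where y: "y \<le> m" "\<phi> y = \<phi> x" by auto
  have "{s. \<phi> s \<le> \<phi> x} = {y..x}"
  proof (intro set_eqI iffI)
    fix s assume s: "s \<in> {s. \<phi> s \<le> \<phi> x}"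
    have "s \<le> x" using inc[of x s] True s by (cases "s \<le> x") auto
    moreover have "y \<le> s" using dec[of s y] y s by (cases "y \<le> s") auto
    ultimately show "s \<in> {y..x}" by auto
  next
    fix s assume s: "s \<in> {y..x}"
    show "s \<in> {s. \<phi> s \<le> \<phi> x}"
    proof (cases "m \<le> s")
      case True then show ?thesis using inc[of s x] s by (cases "s = x") auto
    next
      case False then show ?thesis using dec[of y s] s y by (cases "s = y") auto
    qed
  qed
  moreover have "x \<le> m \<longrightarrow> m \<le> y"
  proof
    assume "x \<le> m"
    then have "x = m" using True by auto
    show "m \<le> y"
    proof (rule ccontr)
      assume "\<not> m \<le> y"
      then show False using dec[of y m] y \<open>x = m\<close> by auto
    qed
  qed
  ultimately show ?thesis using y True by (intro exI[of _ y]) auto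
next
  case False
  have fm: "\<phi> m \<le> \<phi> x" using dec[of x m] False by auto
  have "eventually (\<lambda>s. \<phi> s \<ge> \<phi> x) at_top"
    using lim1 by (simp add: filterlim_at_top)
  then obtain X0 where X0: "\<And>s. s \<ge> X0 \<Longrightarrow> \<phi> s \<ge> \<phi> x" by (auto simp: eventually_at_top_linorder)
  define X where "X = max X0 m"
  have "\<exists>y\<ge>m. y \<le> X \<and> \<phi> y = \<phi> x"
    by (rule IVT') (use fm X0 in \<open>auto simp: X_def intro: continuous_on_subset[OF cont]\<close>)
  then obtain y where y: "m \<le> y" "\<phi> y = \<phi> x" by auto
  have "{s. \<phi> s \<le> \<phi> x} = {x..y}"
  proof (intro set_eqI iffI)
    fix s assume s: "s \<in> {s. \<phi> s \<le> \<phi> x}"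
    have "s \<le> y" using inc[of y s] y s by (cases "s \<le> y") auto
    moreover have "x \<le> s" using dec[of s x] False s by (cases "x \<le> s") auto
    ultimately show "s \<in> {x..y}" by auto
  next
    fix s assume s: "s \<in> {x..y}"
    show "s \<in> {s. \<phi> s \<le> \<phi> x}"
    proof (cases "m \<le> s")
      case True then show ?thesis using inc[of s y] s y by (cases "s = y") auto
    next
      case False then show ?thesis using dec[of x s] s by (cases "s = x") auto
    qed
  qed
  then show ?thesis using y False by (intro exI[of _ y]) auto
qed



lemma level_one:
  fixes \<phi> :: "real \<Rightarrow> real"
  assumes inc: "\<And>x y. m \<le> x \<Longrightarrow> x < y \<Longrightarrow> \<phi> x < \<phi> y"
    and dec: "\<And>x y. x < y \<Longrightarrow> y \<le> m \<Longrightarrow> \<phi> y < \<phi> x"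
    and inv: "\<And>x. x \<in> K \<Longrightarrow> \<exists>y\<in>K. \<phi> y = \<phi> x \<and> (m \<le> x \<longrightarrow> y \<le> m) \<and> (x \<le> m \<longrightarrow> m \<le> y)"
    and aK: "a \<in> K" and bK: "b \<in> K" and ab: "\<And>k. k \<in> K \<Longrightarrow> a \<le> k \<and> k \<le> b"
  shows "\<phi> a = \<phi> b \<and> (a = b \<longrightarrow> a = m)"
proof -
  have inc': "\<phi> x \<le> \<phi> y" if "m \<le> x" "x \<le> y" for x y
    using inc[of x y] that by (cases "x = y") auto
  have dec': "\<phi> y \<le> \<phi> x" if "x \<le> y" "y \<le> m" for x y
    using dec[of x y] that by (cases "x = y") auto
  obtain y where y: "y \<in> K" "\<phi> y = \<phi> a" "m \<le> a \<longrightarrow> y \<le> m" "a \<le> m \<longrightarrow> m \<le> y"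
    using inv[OF aK] by blast
  obtain z where z: "z \<in> K" "\<phi> z = \<phi> b" "m \<le> b \<longrightarrow> z \<le> m" "b \<le> m \<longrightarrow> m \<le> z"
    using inv[OF bK] by blast
  have yab: "a \<le> y" "y \<le> b" and zab: "a \<le> z" "z \<le> b" using ab y(1) z(1) by auto
  have "a \<le> b" using ab aK by auto
  show ?thesis
  proof (cases "a = b")
    case True
    then show ?thesis using y yab by force
  next
    case False
    have "\<phi> a = \<phi> b"
    proof (cases "b \<le> m")
      case True
      then have "z = b" "b = m" using z zab by auto
      then have "y = b" using y yab by auto
      then show ?thesis using y by auto
    next
      case nb: False
      show ?thesis
      proof (cases "m \<le> a")
        case True
        then have "y = a" "a = m" using y yab by auto
        then have "z = a" using z zab by auto
        then show ?thesis using z by auto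
      next
        case na: False
        have "\<phi> a \<le> \<phi> b" using inc'[of y b] y yab na by auto
        moreover have "\<phi> b \<le> \<phi> a" using dec'[of a z] z zab nb by auto
        ultimately show ?thesis by auto
      qed
    qed
    then show ?thesis using False by auto
  qed
qed

lemma levelset:
  fixes G \<phi>a \<phi>b :: "real \<Rightarrow> real"
  assumes cont: "\<And>x. isCont G x" and lt: "(G \<longlongrightarrow> 0) at_top" and lb: "(G \<longlongrightarrow> 0) at_bot"
    and inc1: "\<And>x y. ma \<le> x \<Longrightarrow> x < y \<Longrightarrow> \<phi>a x < \<phi>a y"
    and dec1: "\<And>x y. x < y \<Longrightarrow> y \<le> ma \<Longrightarrow> \<phi>a y < \<phi>a x"
    and inc2: "\<And>x y. mb \<le> x \<Longrightarrow> x < y \<Longrightarrow> \<phi>b x < \<phi>b y"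
    and dec2: "\<And>x y. x < y \<Longrightarrow> y \<le> mb \<Longrightarrow> \<phi>b y < \<phi>b x"
    and inv1: "\<And>x. \<exists>y. \<phi>a y = \<phi>a x \<and> G y = G x \<and> (ma \<le> x \<longrightarrow> y \<le> ma) \<and> (x \<le> ma \<longrightarrow> ma \<le> y)"
    and inv2: "\<And>x. \<exists>y. \<phi>b y = \<phi>b x \<and> G y = G x \<and> (mb \<le> x \<longrightarrow> y \<le> mb) \<and> (x \<le> mb \<longrightarrow> mb \<le> y)"
    and slope: "\<And>a b. a < b \<Longrightarrow> \<phi>a a = \<phi>a b \<Longrightarrow> \<phi>b a = \<phi>b b \<Longrightarrow> False"
  shows "G x0 = 0"
proof (rule ccontr)
  assume G0: "G x0 \<noteq> 0"
  obtain x1 where x1: "G x1 \<noteq> 0" "G x1 / 2 \<noteq> G ma"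
  proof (cases "G ma = 0")
    case True then show ?thesis using that[of x0] G0 by auto
  next
    case False then show ?thesis using that[of ma] by auto
  qed
  define w where "w = G x1 / 2"
  have w0: "w \<noteq> 0" using x1 by (auto simp: w_def)
  have wpos: "\<bar>w\<bar> > 0" using w0 by auto
  have "eventually (\<lambda>s. dist (G s) 0 < \<bar>w\<bar>) at_top" using lt wpos by (rule tendstoD)
  then obtain B1 where B1: "\<And>s. s \<ge> B1 \<Longrightarrow> \<bar>G s\<bar> < \<bar>w\<bar>" by (auto simp: eventually_at_top_linorder)
  have "eventually (\<lambda>s. dist (G s) 0 < \<bar>w\<bar>) at_bot" using lb wpos by (rule tendstoD)
  then obtain B2 where B2: "\<And>s. s \<le> B2 \<Longrightarrow> \<bar>G s\<bar> < \<bar>w\<bar>" by (auto simp: eventually_at_bot_linorder)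
  have contG: "continuous_on UNIV G" using cont by (simp add: continuous_at_imp_continuous_on)
  define X where "X = max B1 x1"
  have GX: "\<bar>G X\<bar> < \<bar>w\<bar>" using B1 by (auto simp: X_def)
  have "\<exists>x\<ge>x1. x \<le> X \<and> G x = w"
  proof (cases "w > 0")
    case True
    show ?thesis
      by (rule IVT2') (use True GX in \<open>auto simp: X_def w_def intro: continuous_on_subset[OF contG]\<close>)
  next
    case False
    show ?thesis
      by (rule IVT') (use False GX w0 in \<open>auto simp: X_def w_def intro: continuous_on_subset[OF contG]\<close>)
  qed
  then obtain xw where xw: "G xw = w" by auto
  define K where "K = {x. G x = w}"
  have Kne: "K \<noteq> {}" using xw by (auto simp: K_def)
  have "closed K" unfolding K_def
    using continuous_closed_vimage[OF closed_singleton cont] by (simp add: vimage_def)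
  moreover have "K \<subseteq> {B2..B1}"
  proof
    fix x assume "x \<in> K"
    then have "\<bar>G x\<bar> = \<bar>w\<bar>" by (auto simp: K_def)
    then show "x \<in> {B2..B1}" using B1[of x] B2[of x] by force
  qed
  then have "bounded K" by (rule bounded_subset[OF bounded_closed_interval])
  ultimately have cK: "compact K" by (simp add: compact_eq_bounded_closed)
  obtain a where a: "a \<in> K" "\<And>k. k \<in> K \<Longrightarrow> a \<le> k"
    using compact_attains_inf[OF cK Kne] by blast
  obtain b where b: "b \<in> K" "\<And>k. k \<in> K \<Longrightarrow> k \<le> b"
    using compact_attains_sup[OF cK Kne] by blast
  have r1: "\<phi>a a = \<phi>a b \<and> (a = b \<longrightarrow> a = ma)"
  proof (rule level_one[OF inc1 dec1 _ a(1) b(1)])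
    fix x assume "x \<in> K"
    then show "\<exists>y\<in>K. \<phi>a y = \<phi>a x \<and> (ma \<le> x \<longrightarrow> y \<le> ma) \<and> (x \<le> ma \<longrightarrow> ma \<le> y)"
      using inv1[of x] by (auto simp: K_def)
  qed (use a b in auto)
  have r2: "\<phi>b a = \<phi>b b"
  proof -
    have "\<phi>b a = \<phi>b b \<and> (a = b \<longrightarrow> a = mb)"
    proof (rule level_one[OF inc2 dec2 _ a(1) b(1)])
      fix x assume "x \<in> K"
      then show "\<exists>y\<in>K. \<phi>b y = \<phi>b x \<and> (mb \<le> x \<longrightarrow> y \<le> mb) \<and> (x \<le> mb \<longrightarrow> mb \<le> y)"
        using inv2[of x] by (auto simp: K_def)
    qed (use a b in auto)
    then show ?thesis by auto
  qed
  have "a \<le> b" using a b by auto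
  show False
  proof (cases "a = b")
    case True
    then have "a = ma" using r1 by auto
    then have "G ma = w" using a by (auto simp: K_def)
    then show False using x1 by (auto simp: w_def)
  next
    case False
    then show False using slope[of a b] r1 r2 \<open>a \<le> b\<close> by auto
  qed
qed

lemma slope_lemma:
  fixes \<psi> :: "real \<Rightarrow> real"
  assumes "\<theta>1 \<noteq> \<theta>2" "\<theta>1 \<in> {0<..<pi}" "\<theta>2 \<in> {0<..<pi}" "a < b"
    and e1: "\<psi> a * sin \<theta>1 + a * cos \<theta>1 = \<psi> b * sin \<theta>1 + b * cos \<theta>1"
    and e2: "\<psi> a * sin \<theta>2 + a * cos \<theta>2 = \<psi> b * sin \<theta>2 + b * cos \<theta>2"
  shows False
proof -
  define d where "d = \<psi> b - \<psi> a"
  define e where "e = b - a"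
  have 1: "d * sin \<theta>1 + e * cos \<theta>1 = 0" using e1 by (simp add: d_def e_def algebra_simps)
  have 2: "d * sin \<theta>2 + e * cos \<theta>2 = 0" using e2 by (simp add: d_def e_def algebra_simps)
  have "e * (sin \<theta>2 * cos \<theta>1 - cos \<theta>2 * sin \<theta>1) =
        sin \<theta>2 * (d * sin \<theta>1 + e * cos \<theta>1) - sin \<theta>1 * (d * sin \<theta>2 + e * cos \<theta>2)"
    by (simp add: algebra_simps)
  also have "\<dots> = 0" using 1 2 by simp
  finally have "e * sin (\<theta>2 - \<theta>1) = 0" by (simp add: sin_diff)
  moreover have "e \<noteq> 0" using assms by (simp add: e_def)
  ultimately have "sin (\<theta>2 - \<theta>1) = 0" by simp
  moreover have "- pi < \<theta>2 - \<theta>1" "\<theta>2 - \<theta>1 < pi" using assms by auto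
  ultimately have "\<theta>2 - \<theta>1 = 0" using sin_eq_0_pi by blast
  then show False using assms by simp
qed



lemma char_density:
  fixes N :: "real measure" and v \<phi> :: "real \<Rightarrow> real"
  assumes sN: "sets N = sets borel" and vm: "v \<in> borel_measurable N"
    and \<phi>m: "\<phi> \<in> borel_measurable borel" and nn: "\<And>s. 0 \<le> v s"
  shows "char (distr (density N v) borel \<phi>) t = (CLINT s|N. iexp (t * \<phi> s) * complex_of_real (v s))"
proof -
  have \<phi>N: "\<phi> \<in> borel_measurable N" unfolding measurable_cong_sets[OF sN refl] by (rule \<phi>m)
  have \<phi>D: "\<phi> \<in> borel_measurable (density N v)" using \<phi>N by (simp only: measurable_density_eq1)
  have im: "(\<lambda>x. iexp (t * x)) \<in> borel_measurable borel"
    by (intro borel_measurable_continuous_onI continuous_on_exp continuous_on_mult continuous_on_const continuous_on_of_real continuous_on_id)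
  have "char (distr (density N v) borel \<phi>) t = (CLINT s|density N v. iexp (t * \<phi> s))"
    unfolding char_def by (rule integral_distr[OF \<phi>D im])
  also have "\<dots> = (CLINT s|N. v s *\<^sub>R iexp (t * \<phi> s))"
    by (rule integral_density) (use measurable_compose[OF \<phi>N im] vm nn in auto)
  also have "\<dots> = (CLINT s|N. iexp (t * \<phi> s) * complex_of_real (v s))"
    by (rule Bochner_Integration.integral_cong) (simp_all only: scaleR_conv_of_real mult.commute)
  finally show ?thesis .
qed

lemma ind_density:
  fixes N :: "real measure" and v \<phi> :: "real \<Rightarrow> real"
  assumes sN: "sets N = sets borel" and vm: "v \<in> borel_measurable N"
    and \<phi>m: "\<phi> \<in> borel_measurable borel" and nn: "\<And>s. 0 \<le> v s"
  shows "(LINT x|distr (density N v) borel \<phi>. indicator {..c} x) = (LINT s|N. indicator {s. \<phi> s \<le> c} s * v s)"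
proof -
  have \<phi>N: "\<phi> \<in> borel_measurable N" unfolding measurable_cong_sets[OF sN refl] by (rule \<phi>m)
  have \<phi>D: "\<phi> \<in> borel_measurable (density N v)" using \<phi>N by (simp only: measurable_density_eq1)
  have im: "(indicator {..c} :: real \<Rightarrow> real) \<in> borel_measurable borel" by simp
  have "(LINT x|distr (density N v) borel \<phi>. indicator {..c} x) = (LINT s|density N v. indicator {..c} (\<phi> s) :: real)"
    by (rule integral_distr[OF \<phi>D im])
  also have "\<dots> = (LINT s|N. v s *\<^sub>R indicator {..c} (\<phi> s) :: real)"
    by (rule integral_density) (use measurable_compose[OF \<phi>N im] vm nn in auto)
  also have "\<dots> = (LINT s|N. indicator {s. \<phi> s \<le> c} s * v s)"
    by (rule Bochner_Integration.integral_cong) (auto simp: indicator_def)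
  finally show ?thesis .
qed

lemma rd_density:
  fixes N :: "real measure" and v \<phi> :: "real \<Rightarrow> real"
  assumes sN: "sets N = sets borel" and vi: "integrable N v"
    and \<phi>m: "\<phi> \<in> borel_measurable borel" and nn: "\<And>s. 0 \<le> v s" and one: "(LINT s|N. v s) = 1"
  shows "real_distribution (distr (density N v) borel \<phi>)"
proof -
  have \<phi>N: "\<phi> \<in> borel_measurable N" unfolding measurable_cong_sets[OF sN refl] by (rule \<phi>m)
  have \<phi>D: "\<phi> \<in> measurable (density N v) borel" using \<phi>N by (simp only: measurable_density_eq1)
  have vm: "v \<in> borel_measurable N" using vi by (rule borel_measurable_integrable)
  have "emeasure (density N v) (space (density N v)) = (\<integral>\<^sup>+ x. ennreal (v x) * indicator (space N) x \<partial>N)"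
    unfolding space_density by (rule emeasure_density) (use vm in auto)
  also have "\<dots> = (\<integral>\<^sup>+ x. ennreal (v x) \<partial>N)"
    by (intro nn_integral_cong) auto
  also have "\<dots> = ennreal (LINT s|N. v s)"
    by (rule nn_integral_eq_integral[OF vi]) (use nn in auto)
  also have "\<dots> = 1" using one by simp
  finally have "prob_space (density N v)" by (rule prob_spaceI)
  then have "prob_space (distr (density N v) borel \<phi>)"
    by (rule prob_space.prob_space_distr[OF _ \<phi>D])
  then show ?thesis
    unfolding real_distribution_def real_distribution_axioms_def by simp
qed

lemma cint:
  fixes N :: "real measure" and v \<phi> :: "real \<Rightarrow> real"
  assumes \<phi>N: "\<phi> \<in> borel_measurable N" and vi: "integrable N v"
  shows "integrable N (\<lambda>s. iexp (t * \<phi> s) * complex_of_real (v s))"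
proof (rule Bochner_Integration.integrable_bound[OF vi])
  have vm: "v \<in> borel_measurable N" using vi by (rule borel_measurable_integrable)
  have im: "(\<lambda>x. iexp (t * x)) \<in> borel_measurable borel"
    by (intro borel_measurable_continuous_onI continuous_on_exp continuous_on_mult continuous_on_const continuous_on_of_real continuous_on_id)
  have "(\<lambda>x. of_real (v x) :: complex) \<in> borel_measurable N"
    by (rule measurable_compose[OF vm]) (intro borel_measurable_continuous_onI continuous_on_of_real continuous_on_id)
  then show "(\<lambda>s. iexp (t * \<phi> s) * complex_of_real (v s)) \<in> borel_measurable N"
    using measurable_compose[OF \<phi>N im] by (intro borel_measurable_times) auto
  show "AE x in N. norm (iexp (t * \<phi> x) * complex_of_real (v x)) \<le> norm (v x)"
    by (simp add: norm_mult)
qed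

lemma fourier_real:
  fixes N :: "real measure" and u \<phi> :: "real \<Rightarrow> real"
  assumes sN: "sets N = sets borel" and ui: "integrable N u"
    and \<phi>m: "\<phi> \<in> borel_measurable borel"
    and F: "\<And>t. (CLINT s|N. iexp (t * \<phi> s) * complex_of_real (u s)) = 0"
  shows "(LINT s|N. indicator {s. \<phi> s \<le> c} s * u s) = 0"
proof -
  have \<phi>N: "\<phi> \<in> borel_measurable N" unfolding measurable_cong_sets[OF sN refl] by (rule \<phi>m)
  define up where "up s = max (u s) 0" for s
  define um where "um s = max (- u s) 0" for s
  have upi: "integrable N up" unfolding up_def using ui by auto
  have umi: "integrable N um" unfolding um_def using ui by auto
  have upm: "up \<in> borel_measurable N" using upi by (rule borel_measurable_integrable)
  have umm: "um \<in> borel_measurable N" using umi by (rule borel_measurable_integrable)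
  have upn: "0 \<le> up s" and umn: "0 \<le> um s" for s by (auto simp: up_def um_def)
  have ud: "u s = up s - um s" for s by (auto simp: up_def um_def)
  have ieq: "(CLINT s|N. iexp (t * \<phi> s) * complex_of_real (up s)) =
             (CLINT s|N. iexp (t * \<phi> s) * complex_of_real (um s))" for t
  proof -
    have "(CLINT s|N. iexp (t * \<phi> s) * complex_of_real (up s)) -
             (CLINT s|N. iexp (t * \<phi> s) * complex_of_real (um s)) =
          (CLINT s|N. iexp (t * \<phi> s) * complex_of_real (up s) - iexp (t * \<phi> s) * complex_of_real (um s))"
      by (rule Bochner_Integration.integral_diff[symmetric, OF cint[OF \<phi>N upi] cint[OF \<phi>N umi]])
    also have "\<dots> = (CLINT s|N. iexp (t * \<phi> s) * complex_of_real (u s))"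
      by (rule Bochner_Integration.integral_cong) (auto simp: ud algebra_simps)
    also have "\<dots> = 0" by (rule F)
    finally show ?thesis by simp
  qed
  define m where "m = (LINT s|N. up s)"
  have mm: "(LINT s|N. um s) = m"
    using ieq[of 0] by (simp add: m_def)
  have m0: "m \<ge> 0" unfolding m_def by (rule integral_nonneg_AE) (simp add: upn)
  have spN: "space N = UNIV" using sets_eq_imp_space_eq[OF sN] by simp
  have ind_m: "{s. \<phi> s \<le> c} \<in> sets N" using measurable_sets[OF \<phi>N, of "{..c}"] spN by (simp add: vimage_def)
  show ?thesis
  proof (cases "m = 0")
    case True
    have "AE s in N. up s = 0"
      using integral_nonneg_eq_0_iff_AE[OF upi] True upn by (simp add: m_def)
    moreover have "AE s in N. um s = 0"
      using integral_nonneg_eq_0_iff_AE[OF umi] True umn mm by simp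
    ultimately have "AE s in N. indicator {s. \<phi> s \<le> c} s * u s = 0"
      by eventually_elim (simp add: ud)
    then show ?thesis by (rule integral_eq_zero_AE)
  next
    case False
    then have mpos: "m > 0" using m0 by auto
    define P1 where "P1 = distr (density N (\<lambda>s. up s / m)) borel \<phi>"
    define P2 where "P2 = distr (density N (\<lambda>s. um s / m)) borel \<phi>"
    have r1: "real_distribution P1" unfolding P1_def
      by (rule rd_density[OF sN _ \<phi>m]) (use upi upn mpos in \<open>auto simp: m_def\<close>)
    have r2: "real_distribution P2" unfolding P2_def
      by (rule rd_density[OF sN _ \<phi>m]) (use umi umn mpos mm in \<open>auto\<close>)
    have upm': "(\<lambda>s. up s / m) \<in> borel_measurable N" using upm by simp
    have umm': "(\<lambda>s. um s / m) \<in> borel_measurable N" using umm by simp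
    have "char P1 t = char P2 t" for t
    proof -
      have "char P1 t = (CLINT s|N. iexp (t * \<phi> s) * complex_of_real (up s / m))"
        unfolding P1_def by (rule char_density[OF sN upm' \<phi>m]) (use upn mpos in auto)
      also have "\<dots> = (CLINT s|N. complex_of_real (1/m) * (iexp (t * \<phi> s) * complex_of_real (up s)))"
        by (rule Bochner_Integration.integral_cong) (auto simp: field_simps)
      also have "\<dots> = complex_of_real (1/m) * (CLINT s|N. iexp (t * \<phi> s) * complex_of_real (um s))"
        by (simp only: integral_mult_right_zero ieq)
      also have "\<dots> = (CLINT s|N. complex_of_real (1/m) * (iexp (t * \<phi> s) * complex_of_real (um s)))"
        by (simp only: integral_mult_right_zero)
      also have "\<dots> = (CLINT s|N. iexp (t * \<phi> s) * complex_of_real (um s / m))"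
        by (rule Bochner_Integration.integral_cong) (auto simp: field_simps)
      also have "\<dots> = char P2 t"
        unfolding P2_def by (rule char_density[OF sN umm' \<phi>m, symmetric]) (use umn mpos in auto)
      finally show ?thesis .
    qed
    then have "P1 = P2" using Levy_uniqueness[OF r1 r2] by auto
    have d1: "(LINT s|N. indicator {s. \<phi> s \<le> c} s * (up s / m)) = (LINT x|P1. indicator {..c} x)"
      unfolding P1_def by (rule ind_density[OF sN upm' \<phi>m, symmetric]) (use upn mpos in auto)
    have d2: "(LINT s|N. indicator {s. \<phi> s \<le> c} s * (um s / m)) = (LINT x|P2. indicator {..c} x)"
      unfolding P2_def by (rule ind_density[OF sN umm' \<phi>m, symmetric]) (use umn mpos in auto)
    have e1: "(LINT s|N. indicator {s. \<phi> s \<le> c} s * (up s / m)) = (LINT s|N. indicator {s. \<phi> s \<le> c} s * up s) / m"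
      by (simp only: times_divide_eq_right integral_divide_zero)
    have e2: "(LINT s|N. indicator {s. \<phi> s \<le> c} s * (um s / m)) = (LINT s|N. indicator {s. \<phi> s \<le> c} s * um s) / m"
      by (simp only: times_divide_eq_right integral_divide_zero)
    have "(LINT s|N. indicator {s. \<phi> s \<le> c} s * up s) / m = (LINT s|N. indicator {s. \<phi> s \<le> c} s * um s) / m"
      using d1 d2 e1 e2 \<open>P1 = P2\<close> by simp
    then have eq: "(LINT s|N. indicator {s. \<phi> s \<le> c} s * up s) = (LINT s|N. indicator {s. \<phi> s \<le> c} s * um s)"
      using mpos by simp
    have i1: "integrable N (\<lambda>s. indicator {s. \<phi> s \<le> c} s * up s)"
      using integrable_real_mult_indicator[OF ind_m upi] by (simp add: mult.commute)
    have i2: "integrable N (\<lambda>s. indicator {s. \<phi> s \<le> c} s * um s)"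
      using integrable_real_mult_indicator[OF ind_m umi] by (simp add: mult.commute)
    have "(LINT s|N. indicator {s. \<phi> s \<le> c} s * u s) =
          (LINT s|N. indicator {s. \<phi> s \<le> c} s * up s - indicator {s. \<phi> s \<le> c} s * um s)"
      by (rule Bochner_Integration.integral_cong) (auto simp: ud algebra_simps)
    also have "\<dots> = 0" using Bochner_Integration.integral_diff[OF i1 i2] eq by simp
    finally show ?thesis .
  qed
qed



lemma G_props:
  fixes N :: "real measure" and u :: "real \<Rightarrow> real"
  assumes sN: "sets N = sets borel" and ui: "integrable N u"
    and sing: "\<And>x. emeasure N {x} = 0"
  defines "G \<equiv> \<lambda>x. LINT s|N. indicator {..x} s * u s"
  shows "isCont G x" and "(G \<longlongrightarrow> (LINT s|N. u s)) at_top" and "(G \<longlongrightarrow> 0) at_bot"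
proof -
  have spN: "space N = UNIV" using sets_eq_imp_space_eq[OF sN] by simp
  have setsN: "A \<in> sets N" if "A \<in> sets borel" for A using that sN by simp
  have um: "u \<in> borel_measurable N" using ui by (rule borel_measurable_integrable)
  have im: "(\<lambda>s. indicator {..y} s * u s) \<in> borel_measurable N" for y :: real
    using integrable_real_mult_indicator[OF setsN[of "{..y}"] ui]
    by (auto simp: mult.commute dest: borel_measurable_integrable)
  have bnd: "norm (indicator {..y} s * u s) \<le> norm (u s)" for y s :: real
    by (auto simp: indicator_def)
  show "isCont G x"
  proof (rule continuous_at_sequentiallyI)
    fix X :: "nat \<Rightarrow> real" assume X: "X \<longlonglongrightarrow> x"
    have ae: "AE s in N. s \<noteq> x"
      by (rule AE_I[of _ _ "{x}"]) (auto simp: sing setsN)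
    have "AE s in N. (\<lambda>n. indicator {..X n} s * u s) \<longlonglongrightarrow> indicator {..x} s * u s"
      using ae
    proof eventually_elim
      fix s assume "s \<noteq> x"
      show "(\<lambda>n. indicator {..X n} s * u s) \<longlonglongrightarrow> indicator {..x} s * u s"
      proof (cases "s < x")
        case True
        have "eventually (\<lambda>n. X n > s) sequentially"
          using X True by (rule order_tendstoD)
        then have "eventually (\<lambda>n. indicator {..X n} s * u s = indicator {..x} s * u s) sequentially"
          by eventually_elim (use True in auto)
        then show ?thesis by (rule tendsto_eventually)
      next
        case False
        then have sx: "s > x" using \<open>s \<noteq> x\<close> by auto
        have "eventually (\<lambda>n. X n < s) sequentially"
          using X sx by (rule order_tendstoD)
        then have "eventually (\<lambda>n. indicator {..X n} s * u s = indicator {..x} s * u s) sequentially"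
          by eventually_elim (use sx in auto)
        then show ?thesis by (rule tendsto_eventually)
      qed
    qed
    then have "(\<lambda>n. LINT s|N. indicator {..X n} s * u s) \<longlonglongrightarrow> (LINT s|N. indicator {..x} s * u s)"
      by (intro integral_dominated_convergence[where w="\<lambda>s. norm (u s)"] im) (use ui bnd in auto)
    then show "(\<lambda>n. G (X n)) \<longlonglongrightarrow> G x" by (simp add: G_def)
  qed
  have "((\<lambda>t. LINT s|N. indicator {..t} s * u s) \<longlongrightarrow> (LINT s|N. u s)) at_top"
  proof (rule integral_dominated_convergence_at_top[where w="\<lambda>s. norm (u s)"])
    show "AE s in N. ((\<lambda>t. indicator {..t} s * u s) \<longlongrightarrow> u s) at_top"
    proof (intro AE_I2 tendsto_eventually)
      fix s
      show "eventually (\<lambda>t. indicator {..t} s * u s = u s) at_top"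
        using eventually_ge_at_top[of s] by eventually_elim auto
    qed
  qed (use ui um im bnd in auto)
  then show "(G \<longlongrightarrow> (LINT s|N. u s)) at_top" by (simp add: G_def)
  have "((\<lambda>t. LINT s|N. indicator {..-t} s * u s) \<longlongrightarrow> (LINT s|N. 0)) at_top"
  proof (rule integral_dominated_convergence_at_top[where w="\<lambda>s. norm (u s)"])
    show "AE s in N. ((\<lambda>t. indicator {..-t} s * u s) \<longlongrightarrow> 0) at_top"
    proof (intro AE_I2 tendsto_eventually)
      fix s
      show "eventually (\<lambda>t. indicator {..-t} s * u s = 0) at_top"
        using eventually_gt_at_top[of "-s"] by eventually_elim auto
    qed
  qed (use ui um im bnd in auto)
  then have "((\<lambda>t. G (-t)) \<longlongrightarrow> 0) at_top" by (simp add: G_def)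
  then show "(G \<longlongrightarrow> 0) at_bot" by (simp add: filterlim_at_bot_mirror)
qed



lemma zero_from_atMost:
  fixes N :: "real measure" and u :: "real \<Rightarrow> real"
  assumes sN: "sets N = sets borel" and ui: "integrable N u"
    and G0: "\<And>x. (LINT s|N. indicator {..x} s * u s) = 0" and tot: "(LINT s|N. u s) = 0"
  shows "AE s in N. u s = 0"
proof -
  have spN: "space N = UNIV" using sets_eq_imp_space_eq[OF sN] by simp
  have sb: "sets borel = sigma_sets UNIV (range (\<lambda>a::real. {..a}))"
    by (subst borel_eq_atMost) (rule sets_measure_of, auto)
  have allA: "set_lebesgue_integral N A u = 0" if "A \<in> sets N" for A
  proof -
  from that have Asig: "A \<in> sigma_sets UNIV (range (\<lambda>a::real. {..a}))" using sN sb by simp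
  have ist: "Int_stable (range (\<lambda>a::real. {..a}))"
    by (auto simp: Int_stable_def intro!: exI[of _ "min _ _"])
  show "set_lebesgue_integral N A u = 0"
  proof (induct rule: sigma_sets_induct_disjoint[OF ist _ Asig, case_names closed basic empty compl union])
    case closed show ?case by auto
  next
    case (basic A)
    then obtain x where "A = {..x}" by auto
    then show ?case using G0[of x] by (simp add: set_lebesgue_integral_def)
  next
    case empty show ?case by (simp add: set_lebesgue_integral_def)
  next
    case (compl A)
    then have AN: "A \<in> sets N" using sN sb by simp
    have "set_lebesgue_integral N (UNIV - A) u = (LINT s|N. u s - indicator A s *\<^sub>R u s)"
      unfolding set_lebesgue_integral_def
      by (rule Bochner_Integration.integral_cong) (auto simp: indicator_def)
    also have "\<dots> = (LINT s|N. u s) - set_lebesgue_integral N A u"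
      unfolding set_lebesgue_integral_def
      by (rule Bochner_Integration.integral_diff[OF ui integrable_mult_indicator[OF AN ui]])
    finally show ?case using compl tot by simp
  next
    case (union A)
    then have AN: "A i \<in> sets N" for i using sN sb by auto
    have UN: "(\<Union>i. A i) \<in> sets N" using AN by auto
    have "set_lebesgue_integral N (\<Union>i. A i) u = (\<Sum>i. set_lebesgue_integral N (A i) u)"
    proof (rule lebesgue_integral_countable_add[OF AN])
      show "A i \<inter> A j = {}" if "i \<noteq> j" for i j
        using union(1) that by (auto simp: disjoint_family_on_def)
      show "set_integrable N (\<Union>i. A i) u"
        unfolding set_integrable_def by (rule integrable_mult_indicator[OF UN ui])
    qed
    then show ?case using union by simp
  qed
  qed
  have um: "u \<in> borel_measurable N" using ui by (rule borel_measurable_integrable)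
  have Ap: "{s. u s > 0} \<in> sets N" using measurable_sets[OF um, of "{0<..}"] spN by (simp add: vimage_def)
  have An: "{s. u s < 0} \<in> sets N" using measurable_sets[OF um, of "{..<0}"] spN by (simp add: vimage_def)
  have ip: "integrable N (\<lambda>s. indicator {s. u s > 0} s *\<^sub>R u s)" by (rule integrable_mult_indicator[OF Ap ui])
  have in': "integrable N (\<lambda>s. - (indicator {s. u s < 0} s *\<^sub>R u s))" by (intro integrable_minus integrable_mult_indicator[OF An ui])
  have "AE s in N. indicator {s. u s > 0} s *\<^sub>R u s = 0"
    using integral_nonneg_eq_0_iff_AE[OF ip] allA[OF Ap] by (auto simp: set_lebesgue_integral_def indicator_def)
  moreover have "AE s in N. - (indicator {s. u s < 0} s *\<^sub>R u s) = 0"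
    using integral_nonneg_eq_0_iff_AE[OF in'] allA[OF An] by (auto simp: set_lebesgue_integral_def indicator_def)
  ultimately show ?thesis
    by eventually_elim (auto simp: indicator_def split: if_splits)
qed



lemma phi_meas:
  fixes \<psi> :: "real \<Rightarrow> real"
  assumes c: "continuous_on UNIV \<psi>"
  shows "continuous_on UNIV (\<lambda>s. \<psi> s * sin \<theta> + s * cos \<theta>)"
    and "(\<lambda>s. \<psi> s * sin \<theta> + s * cos \<theta>) \<in> borel_measurable borel"
proof -
  show c2: "continuous_on UNIV (\<lambda>s. \<psi> s * sin \<theta> + s * cos \<theta>)"
    by (intro continuous_on_add continuous_on_mult c continuous_on_const continuous_on_id)
  show "(\<lambda>s. \<psi> s * sin \<theta> + s * cos \<theta>) \<in> borel_measurable borel"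
    by (rule borel_measurable_continuous_onI[OF c2])
qed

lemma theta_data:
  fixes N :: "real measure" and u \<psi> :: "real \<Rightarrow> real"
  assumes sN: "sets N = sets borel" and ui: "integrable N u"
    and sing: "\<And>x. emeasure N {x} = 0" and c\<psi>: "continuous_on UNIV \<psi>"
    and l1: "filterlim (\<lambda>s. \<psi> s * sin \<theta> + s * cos \<theta>) at_top at_top"
    and l2: "filterlim (\<lambda>s. \<psi> s * sin \<theta> + s * cos \<theta>) at_top at_bot"
    and ex: "\<exists>!s. is_local_min (\<lambda>s. \<psi> s * sin \<theta> + s * cos \<theta>) s"
    and four: "\<And>c. (LINT s|N. indicator {s. \<psi> s * sin \<theta> + s * cos \<theta> \<le> c} s * u s) = 0"
  defines "\<phi> \<equiv> \<lambda>s. \<psi> s * sin \<theta> + s * cos \<theta>"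
  defines "G \<equiv> \<lambda>x. LINT s|N. indicator {..x} s * u s"
  shows "\<exists>m. (\<forall>x y. m \<le> x \<longrightarrow> x < y \<longrightarrow> \<phi> x < \<phi> y) \<and> (\<forall>x y. x < y \<longrightarrow> y \<le> m \<longrightarrow> \<phi> y < \<phi> x) \<and>
     (\<forall>x. \<exists>y. \<phi> y = \<phi> x \<and> G y = G x \<and> (m \<le> x \<longrightarrow> y \<le> m) \<and> (x \<le> m \<longrightarrow> m \<le> y))"
proof -
  have spN: "space N = UNIV" using sets_eq_imp_space_eq[OF sN] by simp
  have setsN: "A \<in> sets N" if "A \<in> sets borel" for A using that sN by simp
  have c\<phi>: "continuous_on UNIV \<phi>" unfolding \<phi>_def by (rule phi_meas[OF c\<psi>])
  obtain m where m: "is_local_min \<phi> m" and mu: "\<And>s. is_local_min \<phi> s \<Longrightarrow> s = m"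
    using ex unfolding \<phi>_def by blast
  have l1': "filterlim \<phi> at_top at_top" and l2': "filterlim \<phi> at_top at_bot"
    using l1 l2 by (simp_all add: \<phi>_def)
  note sh = shape[OF c\<phi> l1' l2' m mu]
  have inv: "\<exists>y. \<phi> y = \<phi> x \<and> G y = G x \<and> (m \<le> x \<longrightarrow> y \<le> m) \<and> (x \<le> m \<longrightarrow> m \<le> y)" for x
  proof -
    obtain y where y: "\<phi> y = \<phi> x" "{s. \<phi> s \<le> \<phi> x} = {min x y..max x y}"
        "m \<le> x \<longrightarrow> y \<le> m" "x \<le> m \<longrightarrow> m \<le> y"
      using partner[OF c\<phi> l1' l2' sh(1) sh(2), where x=x] by blast
    define a where "a = min x y"
    define b where "b = max x y"
    have ab: "a \<le> b" by (simp add: a_def b_def)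
    have z: "(LINT s|N. indicator {a..b} s * u s) = 0"
      using four[of "\<phi> x"] y(2) by (simp add: a_def b_def \<phi>_def)
    have ia: "integrable N (\<lambda>s. indicator {..a} s * u s)"
      using integrable_real_mult_indicator[OF setsN[of "{..a}"] ui] by (simp add: mult.commute)
    have ib: "integrable N (\<lambda>s. indicator {..b} s * u s)"
      using integrable_real_mult_indicator[OF setsN[of "{..b}"] ui] by (simp add: mult.commute)
    have ae: "AE s in N. s \<noteq> a"
      by (rule AE_I[of _ _ "{a}"]) (auto simp: sing setsN)
    have "G b - G a = (LINT s|N. indicator {..b} s * u s - indicator {..a} s * u s)"
      unfolding G_def by (rule Bochner_Integration.integral_diff[OF ib ia, symmetric])
    also have "\<dots> = (LINT s|N. indicator {a..b} s * u s)"
    proof (rule integral_cong_AE)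
      show "(\<lambda>s. indicator {..b} s * u s - indicator {..a} s * u s) \<in> borel_measurable N"
        using ia ib by (intro borel_measurable_diff borel_measurable_integrable)
      show "(\<lambda>s. indicator {a..b} s * u s) \<in> borel_measurable N"
        using integrable_real_mult_indicator[OF setsN[of "{a..b}"] ui]
        by (simp add: mult.commute borel_measurable_integrable)
      show "AE s in N. indicator {..b} s * u s - indicator {..a} s * u s = indicator {a..b} s * u s"
        using ae by eventually_elim (use ab in \<open>auto simp: indicator_def\<close>)
    qed
    finally have "G a = G b" using z by simp
    then have "G y = G x" by (cases "x \<le> y") (auto simp: a_def b_def)
    then show ?thesis using y by blast
  qed
  show ?thesis using sh inv by blast
qed



lemma core_real:
  fixes N :: "real measure" and u \<psi> :: "real \<Rightarrow> real" and \<theta>1 \<theta>2 :: real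
  assumes sN: "sets N = sets borel" and ui: "integrable N u"
    and sing: "\<And>x. emeasure N {x} = 0" and c\<psi>: "continuous_on UNIV \<psi>"
    and th: "\<theta>1 \<noteq> \<theta>2" "\<theta>1 \<in> {0<..<pi}" "\<theta>2 \<in> {0<..<pi}"
    and hyp: "\<forall>\<theta>\<in>{\<theta>1, \<theta>2}.
           filterlim (\<lambda>s. \<psi> s * sin \<theta> + s * cos \<theta>) at_top at_top \<and>
           filterlim (\<lambda>s. \<psi> s * sin \<theta> + s * cos \<theta>) at_top at_bot \<and>
           (\<exists>!s. is_local_min (\<lambda>s. \<psi> s * sin \<theta> + s * cos \<theta>) s)"
    and four: "\<And>\<theta> c. \<theta> \<in> {\<theta>1, \<theta>2} \<Longrightarrow> (LINT s|N. indicator {s. \<psi> s * sin \<theta> + s * cos \<theta> \<le> c} s * u s) = 0"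
  shows "AE s in N. u s = 0"
proof -
  define G where "G = (\<lambda>x. LINT s|N. indicator {..x} s * u s)"
  note gp = G_props[OF sN ui sing, folded G_def]
  have spN: "space N = UNIV" using sets_eq_imp_space_eq[OF sN] by simp
  let ?\<phi> = "\<lambda>s. \<psi> s * sin \<theta>1 + s * cos \<theta>1"
  have \<phi>m: "?\<phi> \<in> borel_measurable N"
    unfolding measurable_cong_sets[OF sN refl] by (rule phi_meas(2)[OF c\<psi>])
  have tot: "(LINT s|N. u s) = 0"
  proof -
    have lim: "((\<lambda>c. LINT s|N. indicator {s. ?\<phi> s \<le> c} s * u s) \<longlongrightarrow> (LINT s|N. u s)) at_top"
    proof (rule integral_dominated_convergence_at_top[where w="\<lambda>s. norm (u s)"])
      show "AE s in N. ((\<lambda>c. indicator {s. ?\<phi> s \<le> c} s * u s) \<longlongrightarrow> u s) at_top"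
      proof (intro AE_I2 tendsto_eventually)
        fix s
        show "eventually (\<lambda>c. indicator {s. ?\<phi> s \<le> c} s * u s = u s) at_top"
          using eventually_ge_at_top[of "?\<phi> s"] by eventually_elim auto
      qed
      show "u \<in> borel_measurable N" using ui by (rule borel_measurable_integrable)
      show "integrable N (\<lambda>s. norm (u s))" using ui by simp
      show "\<forall>\<^sub>F i in at_top. AE x in N. norm (indicator {s. ?\<phi> s \<le> i} x * u x) \<le> norm (u x)"
        by (intro always_eventually allI AE_I2) (simp split: split_indicator)
      fix c
      have "{s. ?\<phi> s \<le> c} \<in> sets N"
        using measurable_sets[OF \<phi>m, of "{..c}"] spN by (simp add: vimage_def)
      then show "(\<lambda>s. indicator {s. ?\<phi> s \<le> c} s * u s) \<in> borel_measurable N"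
        using integrable_real_mult_indicator[OF _ ui]
        by (simp add: mult.commute borel_measurable_integrable)
    qed
    have eq: "(\<lambda>c. LINT s|N. indicator {s. ?\<phi> s \<le> c} s * u s) = (\<lambda>c. 0)"
      by (rule ext, rule four) simp
    have "((\<lambda>c::real. 0::real) \<longlongrightarrow> (LINT s|N. u s)) at_top" using lim unfolding eq .
    from tendsto_unique[OF trivial_limit_at_top_linorder this tendsto_const] show ?thesis by simp
  qed
  have h1: "filterlim (\<lambda>s. \<psi> s * sin \<theta>1 + s * cos \<theta>1) at_top at_top"
       "filterlim (\<lambda>s. \<psi> s * sin \<theta>1 + s * cos \<theta>1) at_top at_bot"
       "\<exists>!s. is_local_min (\<lambda>s. \<psi> s * sin \<theta>1 + s * cos \<theta>1) s" using hyp by auto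
  have h2: "filterlim (\<lambda>s. \<psi> s * sin \<theta>2 + s * cos \<theta>2) at_top at_top"
       "filterlim (\<lambda>s. \<psi> s * sin \<theta>2 + s * cos \<theta>2) at_top at_bot"
       "\<exists>!s. is_local_min (\<lambda>s. \<psi> s * sin \<theta>2 + s * cos \<theta>2) s" using hyp by auto
  obtain m1 where d1:
    "\<forall>x y. m1 \<le> x \<longrightarrow> x < y \<longrightarrow> \<psi> x * sin \<theta>1 + x * cos \<theta>1 < \<psi> y * sin \<theta>1 + y * cos \<theta>1"
    "\<forall>x y. x < y \<longrightarrow> y \<le> m1 \<longrightarrow> \<psi> y * sin \<theta>1 + y * cos \<theta>1 < \<psi> x * sin \<theta>1 + x * cos \<theta>1"
    "\<forall>x. \<exists>y. \<psi> y * sin \<theta>1 + y * cos \<theta>1 = \<psi> x * sin \<theta>1 + x * cos \<theta>1 \<and> G y = G x \<and> (m1 \<le> x \<longrightarrow> y \<le> m1) \<and> (x \<le> m1 \<longrightarrow> m1 \<le> y)"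
    using theta_data[OF sN ui sing c\<psi> h1 four[of \<theta>1]] unfolding G_def by blast
  obtain m2 where d2:
    "\<forall>x y. m2 \<le> x \<longrightarrow> x < y \<longrightarrow> \<psi> x * sin \<theta>2 + x * cos \<theta>2 < \<psi> y * sin \<theta>2 + y * cos \<theta>2"
    "\<forall>x y. x < y \<longrightarrow> y \<le> m2 \<longrightarrow> \<psi> y * sin \<theta>2 + y * cos \<theta>2 < \<psi> x * sin \<theta>2 + x * cos \<theta>2"
    "\<forall>x. \<exists>y. \<psi> y * sin \<theta>2 + y * cos \<theta>2 = \<psi> x * sin \<theta>2 + x * cos \<theta>2 \<and> G y = G x \<and> (m2 \<le> x \<longrightarrow> y \<le> m2) \<and> (x \<le> m2 \<longrightarrow> m2 \<le> y)"
    using theta_data[OF sN ui sing c\<psi> h2 four[of \<theta>2]] unfolding G_def by blast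
  have G0: "G x = 0" for x
  proof (rule levelset[where \<phi>a="\<lambda>s. \<psi> s * sin \<theta>1 + s * cos \<theta>1" and \<phi>b="\<lambda>s. \<psi> s * sin \<theta>2 + s * cos \<theta>2" and ma=m1 and mb=m2 and G=G])
    show "isCont G x" for x using gp(1) .
    show "(G \<longlongrightarrow> 0) at_top" using gp(2) tot by simp
    show "(G \<longlongrightarrow> 0) at_bot" using gp(3) .
    show "False" if "a < b" "\<psi> a * sin \<theta>1 + a * cos \<theta>1 = \<psi> b * sin \<theta>1 + b * cos \<theta>1"
      "\<psi> a * sin \<theta>2 + a * cos \<theta>2 = \<psi> b * sin \<theta>2 + b * cos \<theta>2" for a b
      by (rule slope_lemma[OF th that])
    show "\<And>x y. m1 \<le> x \<Longrightarrow> x < y \<Longrightarrow> \<psi> x * sin \<theta>1 + x * cos \<theta>1 < \<psi> y * sin \<theta>1 + y * cos \<theta>1"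
      using d1(1) by blast
    show "\<And>x y. x < y \<Longrightarrow> y \<le> m1 \<Longrightarrow> \<psi> y * sin \<theta>1 + y * cos \<theta>1 < \<psi> x * sin \<theta>1 + x * cos \<theta>1"
      using d1(2) by blast
    show "\<And>x y. m2 \<le> x \<Longrightarrow> x < y \<Longrightarrow> \<psi> x * sin \<theta>2 + x * cos \<theta>2 < \<psi> y * sin \<theta>2 + y * cos \<theta>2"
      using d2(1) by blast
    show "\<And>x y. x < y \<Longrightarrow> y \<le> m2 \<Longrightarrow> \<psi> y * sin \<theta>2 + y * cos \<theta>2 < \<psi> x * sin \<theta>2 + x * cos \<theta>2"
      using d2(2) by blast
    show "\<And>x. \<exists>y. \<psi> y * sin \<theta>1 + y * cos \<theta>1 = \<psi> x * sin \<theta>1 + x * cos \<theta>1 \<and> G y = G x \<and> (m1 \<le> x \<longrightarrow> y \<le> m1) \<and> (x \<le> m1 \<longrightarrow> m1 \<le> y)"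
      using d1(3) by blast
    show "\<And>x. \<exists>y. \<psi> y * sin \<theta>2 + y * cos \<theta>2 = \<psi> x * sin \<theta>2 + x * cos \<theta>2 \<and> G y = G x \<and> (m2 \<le> x \<longrightarrow> y \<le> m2) \<and> (x \<le> m2 \<longrightarrow> m2 \<le> y)"
      using d2(3) by blast
  qed
  show ?thesis
    by (rule zero_from_atMost[OF sN ui _ tot]) (use G0 in \<open>simp add: G_def\<close>)
qed



lemma deriv_meas:
  fixes \<psi> :: "real \<Rightarrow> real"
  assumes S: "countable S" and d: "\<And>x. x \<notin> S \<Longrightarrow> \<psi> differentiable (at x)"
    and c: "continuous_on UNIV \<psi>"
  shows "deriv \<psi> \<in> borel_measurable borel"
proof -
  define f where "f n x = (\<psi> (x + 1 / real (Suc n)) - \<psi> x) * real (Suc n)" for n x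
  have fm: "f n \<in> borel_measurable borel" for n
  proof -
    have "continuous_on UNIV (f n)" unfolding f_def
      by (intro continuous_on_mult continuous_on_diff continuous_on_compose2[OF c]
          continuous_on_add continuous_on_id continuous_on_const) auto
    then show ?thesis by (rule borel_measurable_continuous_onI)
  qed
  define L where "L x = lim (\<lambda>n. f n x)" for x
  have Lm: "L \<in> borel_measurable borel" unfolding L_def by (rule borel_measurable_lim_metric[OF fm])
  have eq: "L x = deriv \<psi> x" if "x \<notin> S" for x
  proof -
    have "DERIV \<psi> x :> deriv \<psi> x" using d[OF that] by (simp add: DERIV_deriv_iff_real_differentiable)
    then have lim0: "((\<lambda>h. (\<psi> (x + h) - \<psi> x) / h) \<longlongrightarrow> deriv \<psi> x) (at 0)"
      by (simp add: DERIV_def)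
    have h: "filterlim (\<lambda>n. 1 / real (Suc n)) (at 0) sequentially"
    proof (subst filterlim_at, intro conjI)
      show "\<forall>\<^sub>F n in sequentially. 1 / real (Suc n) \<in> UNIV \<and> 1 / real (Suc n) \<noteq> 0" by simp
      show "(\<lambda>n. 1 / real (Suc n)) \<longlonglongrightarrow> 0" using LIMSEQ_inverse_real_of_nat by (simp add: inverse_eq_divide)
    qed
    have "(\<lambda>n. (\<psi> (x + 1 / real (Suc n)) - \<psi> x) / (1 / real (Suc n))) \<longlonglongrightarrow> deriv \<psi> x"
      using filterlim_compose[OF lim0 h] by (simp add: o_def)
    then have "(\<lambda>n. f n x) \<longlonglongrightarrow> deriv \<psi> x" by (simp add: f_def)
    then show ?thesis unfolding L_def by (rule limI)
  qed
  show ?thesis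
    by (rule measurable_discrete_difference[OF Lm S]) (auto simp: eq)
qed



lemma cplx_to_real:
  fixes N :: "real measure" and F :: "real \<Rightarrow> complex" and \<phi> :: "real \<Rightarrow> real"
  assumes Fi: "integrable N F" and \<phi>N: "\<phi> \<in> borel_measurable N"
    and A: "\<And>t. (CLINT s|N. exp (- \<i> * complex_of_real (t * \<phi> s)) * F s) = 0"
  shows "(CLINT s|N. iexp (t * \<phi> s) * complex_of_real (Re (F s))) = 0"
    and "(CLINT s|N. iexp (t * \<phi> s) * complex_of_real (Im (F s))) = 0"
proof -
  have re_eq: "complex_of_real (Re z) = (z + cnj z) / 2" for z
    by (simp add: complex_eq_iff)
  have im_eq: "complex_of_real (Im z) = (z - cnj z) / (2 * \<i>)" for z
    by (simp add: complex_eq_iff)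
  have Fm[measurable]: "F \<in> borel_measurable N" using Fi by (rule borel_measurable_integrable)
  note [measurable] = \<phi>N
  have i1: "integrable N (\<lambda>s. iexp (t * \<phi> s) * F s)"
    by (rule Bochner_Integration.integrable_bound[OF Fi]) (measurable, simp add: norm_mult)
  have Fc: "integrable N (\<lambda>s. cnj (F s))" using Fi by (rule integrable_cnj)
  have Fcm[measurable]: "(\<lambda>s. cnj (F s)) \<in> borel_measurable N" using Fc by (rule borel_measurable_integrable)
  have i2: "integrable N (\<lambda>s. iexp (t * \<phi> s) * cnj (F s))"
    by (rule Bochner_Integration.integrable_bound[OF Fc]) (measurable, simp add: norm_mult)
  have z1: "(CLINT s|N. iexp (t * \<phi> s) * F s) = 0"
  proof -
    have "(CLINT s|N. iexp (t * \<phi> s) * F s) = (CLINT s|N. exp (- \<i> * complex_of_real (- t * \<phi> s)) * F s)"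
      by (rule Bochner_Integration.integral_cong) auto
    then show ?thesis using A[of "-t"] by simp
  qed
  have z2: "(CLINT s|N. iexp (t * \<phi> s) * cnj (F s)) = 0"
  proof -
    have "(CLINT s|N. iexp (t * \<phi> s) * cnj (F s)) = (CLINT s|N. cnj (exp (- \<i> * complex_of_real (t * \<phi> s)) * F s))"
      by (rule Bochner_Integration.integral_cong) (auto simp: exp_cnj)
    also have "\<dots> = cnj (CLINT s|N. exp (- \<i> * complex_of_real (t * \<phi> s)) * F s)"
      by (rule Bochner_Integration.integral_cnj)
    also have "\<dots> = 0" using A[of t] by simp
    finally show ?thesis .
  qed
  have "(CLINT s|N. iexp (t * \<phi> s) * complex_of_real (Re (F s))) =
        (CLINT s|N. (iexp (t * \<phi> s) * F s + iexp (t * \<phi> s) * cnj (F s)) / 2)"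
    by (rule Bochner_Integration.integral_cong) (simp_all add: re_eq distrib_left add_divide_distrib)
  also have "\<dots> = ((CLINT s|N. iexp (t * \<phi> s) * F s) + (CLINT s|N. iexp (t * \<phi> s) * cnj (F s))) / 2"
    by (simp only: integral_divide_zero Bochner_Integration.integral_add[OF i1 i2])
  finally show "(CLINT s|N. iexp (t * \<phi> s) * complex_of_real (Re (F s))) = 0" using z1 z2 by simp
  have "(CLINT s|N. iexp (t * \<phi> s) * complex_of_real (Im (F s))) =
        (CLINT s|N. (iexp (t * \<phi> s) * F s - iexp (t * \<phi> s) * cnj (F s)) / (2 * \<i>))"
    by (rule Bochner_Integration.integral_cong) (simp_all add: im_eq right_diff_distrib diff_divide_distrib mult_ac)
  also have "\<dots> = ((CLINT s|N. iexp (t * \<phi> s) * F s) - (CLINT s|N. iexp (t * \<phi> s) * cnj (F s))) / (2 * \<i>)"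
    by (simp only: integral_divide_zero Bochner_Integration.integral_diff[OF i1 i2])
  finally show "(CLINT s|N. iexp (t * \<phi> s) * complex_of_real (Im (F s))) = 0" using z1 z2 by simp
qed



theorem theorem3p1:
  fixes \<psi> :: "real \<Rightarrow> real" and \<theta>1 \<theta>2 :: real
  assumes "piecewise_smooth \<psi>"
    and "\<theta>1 \<noteq> \<theta>2" and "\<theta>1 \<in> {0<..<pi}" and "\<theta>2 \<in> {0<..<pi}"
    and "\<forall>\<theta>\<in>{\<theta>1, \<theta>2}.
           filterlim (\<lambda>s. \<psi> s * sin \<theta> + s * cos \<theta>) at_top at_top \<and>
           filterlim (\<lambda>s. \<psi> s * sin \<theta> + s * cos \<theta>) at_top at_bot \<and>
           (\<exists>!s. is_local_min (\<lambda>s. \<psi> s * sin \<theta> + s * cos \<theta>) s)"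
  shows "HUP_graph \<psi> (line \<theta>1 \<union> line \<theta>2)"
proof -
  obtain S where c\<psi>: "continuous_on UNIV \<psi>" and fin: "\<And>a b. finite (S \<inter> {a..b})"
    and dif: "\<And>n x. x \<in> -S \<Longrightarrow> ((deriv ^^ n) \<psi>) differentiable (at x)"
    using assms(1) unfolding piecewise_smooth_def by blast
  have cS: "countable S"
  proof -
    have "S = (\<Union>n::nat. S \<inter> {- real n..real n})"
    proof (intro set_eqI iffI)
      fix x assume "x \<in> S"
      obtain n :: nat where "\<bar>x\<bar> \<le> real n" using real_arch_simple by blast
      then show "x \<in> (\<Union>n::nat. S \<inter> {- real n..real n})" using \<open>x \<in> S\<close> by (intro UN_I[of n]) auto
    qed auto
    also have "countable \<dots>" by (rule countable_UN) (simp_all add: countable_finite[OF fin])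
    finally show ?thesis .
  qed
  have d\<psi>: "\<psi> differentiable (at x)" if "x \<notin> S" for x
    using dif[of x 0] that by simp
  have dm: "deriv \<psi> \<in> borel_measurable borel" by (rule deriv_meas[OF cS d\<psi> c\<psi>])
  define W where "W s = sqrt (1 + (deriv \<psi> s)\<^sup>2)" for s
  have Wm: "W \<in> borel_measurable borel" unfolding W_def using dm by measurable
  define N where "N = density lborel (\<lambda>s. ennreal (W s))"
  define h where "h s = (s, \<psi> s)" for s
  have arc: "arclen \<psi> = distr N borel h" by (simp add: arclen_def N_def W_def h_def[abs_def])
  have sN: "sets N = sets borel" by (simp add: N_def)
  have sing: "emeasure N {x} = 0" for x
  proof -
    have Wm': "(\<lambda>s. ennreal (W s)) \<in> borel_measurable lborel" using Wm by simp
    have "AE s in lborel. s \<in> {x} \<longrightarrow> ennreal (W s) = 0"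
      using AE_lborel_singleton[of x] by eventually_elim auto
    then have "{x} \<in> null_sets N"
      unfolding N_def null_sets_density_iff[OF Wm'] by simp
    then show ?thesis by (rule null_setsD1)
  qed
  have hc: "continuous_on UNIV h" unfolding h_def by (intro continuous_on_Pair continuous_on_id c\<psi>)
  have hm: "h \<in> measurable N borel"
    unfolding measurable_cong_sets[OF sN refl] by (rule borel_measurable_continuous_onI[OF hc])
  show ?thesis unfolding HUP_graph_def
  proof (intro allI impI)
    fix f :: "real \<times> real \<Rightarrow> complex"
    assume fi: "integrable (arclen \<psi>) f"
      and fz: "\<forall>\<xi>\<in>line \<theta>1 \<union> line \<theta>2. fourier_dens (arclen \<psi>) f \<xi> = 0"
    have "f \<in> borel_measurable (arclen \<psi>)" using fi by (rule borel_measurable_integrable)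
    then have fm: "f \<in> borel_measurable borel"
      unfolding arc measurable_cong_sets[OF sets_distr refl] .
    define F where "F s = f (h s)" for s
    have Fi: "integrable N F" using fi unfolding arc integrable_distr_eq[OF hm fm] F_def .
    have real_parts: "(LINT s|N. indicator {s. \<psi> s * sin \<theta> + s * cos \<theta> \<le> c} s * Re (F s)) = 0 \<and>
                      (LINT s|N. indicator {s. \<psi> s * sin \<theta> + s * cos \<theta> \<le> c} s * Im (F s)) = 0"
      if th: "\<theta> \<in> {\<theta>1, \<theta>2}" for \<theta> c
    proof -
      let ?\<phi> = "\<lambda>s. \<psi> s * sin \<theta> + s * cos \<theta>"
      have \<phi>b: "?\<phi> \<in> borel_measurable borel" by (rule phi_meas(2)[OF c\<psi>])
      have \<phi>N: "?\<phi> \<in> borel_measurable N" unfolding measurable_cong_sets[OF sN refl] by (rule \<phi>b)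
      have A: "(CLINT s|N. exp (- \<i> * complex_of_real (t * ?\<phi> s)) * F s) = 0" for t
      proof -
        have "(t * cos \<theta>, t * sin \<theta>) \<in> line \<theta>" unfolding line_def by blast
        then have "fourier_dens (arclen \<psi>) f (t * cos \<theta>, t * sin \<theta>) = 0" using fz th by auto
        then have z: "(CLINT p|arclen \<psi>. exp (- \<i> * complex_of_real (t * cos \<theta> * fst p + t * sin \<theta> * snd p)) * f p) = 0"
          by (simp add: fourier_dens_def)
        have em: "(\<lambda>p. exp (- \<i> * complex_of_real (t * cos \<theta> * fst p + t * sin \<theta> * snd p)) * f p) \<in> borel_measurable borel"
        proof (rule borel_measurable_times[OF _ fm])
          have "continuous_on UNIV (\<lambda>p::real\<times>real. exp (- \<i> * complex_of_real (t * cos \<theta> * fst p + t * sin \<theta> * snd p)))"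
            by (intro continuous_on_exp continuous_on_mult continuous_on_const continuous_on_of_real
                continuous_on_add continuous_on_fst continuous_on_snd continuous_on_id)
          then show "(\<lambda>p::real\<times>real. exp (- \<i> * complex_of_real (t * cos \<theta> * fst p + t * sin \<theta> * snd p))) \<in> borel_measurable borel"
            by (rule borel_measurable_continuous_onI)
        qed
        have "(CLINT p|arclen \<psi>. exp (- \<i> * complex_of_real (t * cos \<theta> * fst p + t * sin \<theta> * snd p)) * f p) =
              (CLINT s|N. exp (- \<i> * complex_of_real (t * cos \<theta> * fst (h s) + t * sin \<theta> * snd (h s))) * f (h s))"
          unfolding arc by (rule integral_distr[OF hm em])
        also have "\<dots> = (CLINT s|N. exp (- \<i> * complex_of_real (t * ?\<phi> s)) * F s)"
          by (rule Bochner_Integration.integral_cong) (simp_all add: h_def F_def algebra_simps)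
        finally show ?thesis using z by simp
      qed
      have "(LINT s|N. indicator {s. ?\<phi> s \<le> c} s * Re (F s)) = 0"
        by (rule fourier_real[OF sN _ \<phi>b]) (use Fi cplx_to_real(1)[OF Fi \<phi>N A] in auto)
      moreover have "(LINT s|N. indicator {s. ?\<phi> s \<le> c} s * Im (F s)) = 0"
        by (rule fourier_real[OF sN _ \<phi>b]) (use Fi cplx_to_real(2)[OF Fi \<phi>N A] in auto)
      ultimately show ?thesis by simp
    qed
    have re: "AE s in N. Re (F s) = 0"
      by (rule core_real[OF sN _ sing c\<psi> assms(2,3,4,5)]) (use Fi real_parts in auto)
    have im: "AE s in N. Im (F s) = 0"
      by (rule core_real[OF sN _ sing c\<psi> assms(2,3,4,5)]) (use Fi real_parts in auto)
    have "AE s in N. f (h s) = 0"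
      using re im by eventually_elim (simp add: F_def complex_eq_iff)
    then show "AE p in arclen \<psi>. f p = 0"
      unfolding arc by (subst AE_distr_iff[OF hm]) (use fm in auto)
  qed
qed

end
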